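(* Let $\mathcal A$ be an infinite simple group, $X$ a finite generating system, $\mathcal K$ a proper non-trivial subgroup and $\Gamma=\mathrm{Sch}(\mathcal A,\mathcal K,X)$. Then the group $\mathrm{Aut}_X(\Gamma)$ of label-preserving automorphisms has infinitely many orbits on vertices. Moreover, if $\mathcal K$ is cyclic of prime order, then $\mathrm{Aut}(\Gamma)$ has infinitely many orbits on vertices, and therefore $\Gamma$ is not almost transitive.
   Context: The Schreier graph $\mathrm{Sch}(\mathcal A,\mathcal K,X)$ has vertices the right cosets $\mathcal Kg$ and, for each coset and each $x$ with $x\in X$ or $x^{-1}\in X$, an edge labeled $x$ from $\mathcal Kg$ to $\mathcal Kgx$ whose inverse is the edge labeled $x^{-1}$ from $\mathcal Kgx$. $\mathrm{Aut}(\Gamma)$ is the group of all graph automorphisms (ignoring labels). A graph is almost transitive if there is a finite set $V_0$ of vertices such that every vertex can be mapped into $V_0$ by an automorphism. *)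

theory Defs
  imports "HOL-Algebra.Algebra"
begin

text \<open>The library locale simple_group
  requires order G > 1, where order is the cardinality, which is 0 for infinite
  groups; hence we use the plain definition: nontrivial group whose only normal
  subgroups are the trivial one and the whole group.\<close>
definition simple_grp :: "('a, 'b) monoid_scheme \<Rightarrow> bool" where
  "simple_grp A \<longleftrightarrow> group A \<and> carrier A \<noteq> {\<one>\<^bsub>A\<^esub>} \<and>
     (\<forall>H. H \<lhd> A \<longrightarrow> H = {\<one>\<^bsub>A\<^esub>} \<or> H = carrier A)"

definition sch_vertices :: "('a, 'b) monoid_scheme \<Rightarrow> 'a set \<Rightarrow> 'a set set" where
  "sch_vertices A K = RCOSETS A K"

definition sch_labels :: "('a, 'b) monoid_scheme \<Rightarrow> 'a set \<Rightarrow> 'a set" where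
  "sch_labels A S = {x \<in> carrier A. x \<in> S \<or> m_inv A x \<in> S}"

definition sch_edges :: "('a, 'b) monoid_scheme \<Rightarrow> 'a set \<Rightarrow> 'a set \<Rightarrow> ('a set \<times> 'a) set" where
  "sch_edges A K S = sch_vertices A K \<times> sch_labels A S"

definition sch_origin :: "'a set \<times> 'a \<Rightarrow> 'a set" where
  "sch_origin e = fst e"

definition sch_terminus :: "('a, 'b) monoid_scheme \<Rightarrow> 'a set \<times> 'a \<Rightarrow> 'a set" where
  "sch_terminus A e = r_coset A (fst e) (snd e)"

definition sch_label :: "'a set \<times> 'a \<Rightarrow> 'a" where
  "sch_label e = snd e"

definition sch_inverse :: "('a, 'b) monoid_scheme \<Rightarrow> 'a set \<times> 'a \<Rightarrow> 'a set \<times> 'a" where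
  "sch_inverse A e = (r_coset A (fst e) (snd e), m_inv A (snd e))"

definition sch_aut :: "('a, 'b) monoid_scheme \<Rightarrow> 'a set \<Rightarrow> 'a set \<Rightarrow>
    ('a set \<Rightarrow> 'a set) \<Rightarrow> ('a set \<times> 'a \<Rightarrow> 'a set \<times> 'a) \<Rightarrow> bool" where
  "sch_aut A K S f g \<longleftrightarrow>
     bij_betw f (sch_vertices A K) (sch_vertices A K) \<and>
     bij_betw g (sch_edges A K S) (sch_edges A K S) \<and>
     (\<forall>e \<in> sch_edges A K S.
        f (sch_origin e) = sch_origin (g e) \<and>
        f (sch_terminus A e) = sch_terminus A (g e) \<and>
        g (sch_inverse A e) = sch_inverse A (g e))"

definition sch_aut_X :: "('a, 'b) monoid_scheme \<Rightarrow> 'a set \<Rightarrow> 'a set \<Rightarrow>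
    ('a set \<Rightarrow> 'a set) \<Rightarrow> ('a set \<times> 'a \<Rightarrow> 'a set \<times> 'a) \<Rightarrow> bool" where
  "sch_aut_X A K S f g \<longleftrightarrow> sch_aut A K S f g \<and>
     (\<forall>e \<in> sch_edges A K S. sch_label (g e) = sch_label e)"

definition vertex_orbits :: "('a, 'b) monoid_scheme \<Rightarrow> 'a set \<Rightarrow>
    (('a set \<Rightarrow> 'a set) \<Rightarrow> ('a set \<times> 'a \<Rightarrow> 'a set \<times> 'a) \<Rightarrow> bool) \<Rightarrow> 'a set set set" where
  "vertex_orbits A K P =
     (\<lambda>v. {w \<in> sch_vertices A K. \<exists>f g. P f g \<and> f v = w}) ` sch_vertices A K"

definition sch_almost_transitive :: "('a, 'b) monoid_scheme \<Rightarrow> 'a set \<Rightarrow> 'a set \<Rightarrow> bool" where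
  "sch_almost_transitive A K S \<longleftrightarrow>
     (\<exists>V0. finite V0 \<and> V0 \<subseteq> sch_vertices A K \<and>
        (\<forall>v \<in> sch_vertices A K. \<exists>f g. sch_aut A K S f g \<and> f v \<in> V0))"

end

theory Submission
  imports Defs
begin

definition nrm :: "('a, 'b) monoid_scheme \<Rightarrow> 'a set \<Rightarrow> 'a set" where
  "nrm G K = {n \<in> carrier G. \<forall>k\<in>K. n \<otimes>\<^bsub>G\<^esub> k \<otimes>\<^bsub>G\<^esub> inv\<^bsub>G\<^esub> n \<in> K \<and> inv\<^bsub>G\<^esub> n \<otimes>\<^bsub>G\<^esub> k \<otimes>\<^bsub>G\<^esub> n \<in> K}"

context group begin

lemma inv_cancel_l [simp]: "a \<in> carrier G \<Longrightarrow> b \<in> carrier G \<Longrightarrow> inv a \<otimes> (a \<otimes> b) = b"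
  by (simp add: m_assoc[symmetric])
lemma inv_cancel_r [simp]: "a \<in> carrier G \<Longrightarrow> b \<in> carrier G \<Longrightarrow> a \<otimes> (inv a \<otimes> b) = b"
  by (simp add: m_assoc[symmetric])

lemma conj_eq1: "a \<in> carrier G \<Longrightarrow> b \<in> carrier G \<Longrightarrow> k \<in> carrier G \<Longrightarrow>
   a \<otimes> b \<otimes> k \<otimes> inv (a \<otimes> b) = a \<otimes> (b \<otimes> k \<otimes> inv b) \<otimes> inv a"
  by (simp add: inv_mult_group m_assoc)

lemma conj_eq2: "g \<in> carrier G \<Longrightarrow> c \<in> carrier G \<Longrightarrow> z \<in> carrier G \<Longrightarrow>
   (g \<otimes> inv c) \<otimes> (c \<otimes> z \<otimes> inv c) \<otimes> inv (g \<otimes> inv c) = g \<otimes> z \<otimes> inv g"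
  by (simp add: inv_mult_group m_assoc)

lemma conj_eq3: "c \<in> carrier G \<Longrightarrow> x \<in> carrier G \<Longrightarrow> y \<in> carrier G \<Longrightarrow> c' \<in> carrier G \<Longrightarrow>
   (c \<otimes> x \<otimes> inv c') \<otimes> inv (c \<otimes> y \<otimes> inv c') = c \<otimes> (x \<otimes> inv y) \<otimes> inv c"
  by (simp add: inv_mult_group m_assoc)

lemma eq_of_inv: "x \<in> carrier G \<Longrightarrow> y \<in> carrier G \<Longrightarrow> x \<otimes> inv y = \<one> \<Longrightarrow> x = y"
proof -
  assume a: "x \<in> carrier G" "y \<in> carrier G" "x \<otimes> inv y = \<one>"
  have "x = (x \<otimes> inv y) \<otimes> y" using a(1,2) by (simp add: m_assoc)
  thus "x = y" using a by simp
qed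


lemma nrm_one: "\<one> \<in> nrm G K" if "K \<subseteq> carrier G"
  using that by (auto simp: nrm_def)

lemma nrm_mult: assumes "K \<subseteq> carrier G" "a \<in> nrm G K" "b \<in> nrm G K" shows "a \<otimes> b \<in> nrm G K"
proof -
  have a: "a \<in> carrier G" and b: "b \<in> carrier G" using assms by (auto simp: nrm_def)
  { fix k assume k: "k \<in> K"
    hence kc: "k \<in> carrier G" using assms by auto
    have "b \<otimes> k \<otimes> inv b \<in> K" "inv a \<otimes> k \<otimes> a \<in> K" using assms k by (auto simp: nrm_def)
    hence 1: "a \<otimes> (b \<otimes> k \<otimes> inv b) \<otimes> inv a \<in> K" "inv b \<otimes> (inv a \<otimes> k \<otimes> a) \<otimes> b \<in> K"
      using assms by (auto simp: nrm_def)
    have "a \<otimes> b \<otimes> k \<otimes> inv (a \<otimes> b) \<in> K" using 1 a b kc by (simp add: conj_eq1)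
    moreover have "inv (a \<otimes> b) \<otimes> k \<otimes> (a \<otimes> b) \<in> K" using 1 a b kc by (simp add: inv_mult_group m_assoc)
    ultimately have "a \<otimes> b \<otimes> k \<otimes> inv (a \<otimes> b) \<in> K \<and> inv (a \<otimes> b) \<otimes> k \<otimes> (a \<otimes> b) \<in> K" by blast }
  thus ?thesis using a b by (auto simp: nrm_def)
qed

lemma nrm_inv: assumes "K \<subseteq> carrier G" "a \<in> nrm G K" shows "inv a \<in> nrm G K"
  using assms by (auto simp: nrm_def)

lemma nrm_conj: assumes "K \<subseteq> carrier G" "a \<in> nrm G K" "b \<in> nrm G K" shows "a \<otimes> b \<otimes> inv a \<in> nrm G K"
  by (rule nrm_mult[OF assms(1) nrm_mult[OF assms(1) assms(2) assms(3)] nrm_inv[OF assms(1) assms(2)]])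

lemma cover_false:
  assumes simp: "\<forall>H. H \<lhd> G \<longrightarrow> H = {\<one>} \<or> H = carrier G"
    and inf: "infinite (carrier G)" and K: "subgroup K G" "K \<noteq> {\<one>}" "K \<noteq> carrier G"
    and G0: "finite G0" "G0 \<subseteq> carrier G"
    and cov: "\<forall>g\<in>carrier G. \<exists>c\<in>G0. g \<otimes> inv c \<in> nrm G K"
  shows False
proof -
  let ?N = "nrm G K"
  have Kc: "K \<subseteq> carrier G" using K subgroup.subset by blast
  have Nc: "?N \<subseteq> carrier G" by (auto simp: nrm_def)
  define C where "C = {c\<in>carrier G. \<forall>g\<in>carrier G. g \<otimes> c \<otimes> inv g \<in> ?N}"
  have sg: "subgroup C G"
  proof (rule subgroupI)
    show "C \<subseteq> carrier G" by (auto simp: C_def)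
    have "\<one> \<in> C" using nrm_one[OF Kc] by (auto simp: C_def)
    thus "C \<noteq> {}" by blast
  next
    fix a assume a: "a \<in> C"
    hence ac: "a \<in> carrier G" by (auto simp: C_def)
    { fix g assume g: "g \<in> carrier G"
      have "g \<otimes> a \<otimes> inv g \<in> ?N" using a g by (auto simp: C_def)
      hence "inv (g \<otimes> a \<otimes> inv g) \<in> ?N" by (rule nrm_inv[OF Kc])
      hence "g \<otimes> inv a \<otimes> inv g \<in> ?N" using g ac by (simp add: inv_mult_group m_assoc) }
    thus "inv a \<in> C" using ac by (auto simp: C_def)
  next
    fix a b assume a: "a \<in> C" and b: "b \<in> C"
    hence ac: "a \<in> carrier G" and bc: "b \<in> carrier G" by (auto simp: C_def)
    { fix g assume g: "g \<in> carrier G"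
      have "g \<otimes> a \<otimes> inv g \<in> ?N" "g \<otimes> b \<otimes> inv g \<in> ?N" using a b g by (auto simp: C_def)
      hence "(g \<otimes> a \<otimes> inv g) \<otimes> (g \<otimes> b \<otimes> inv g) \<in> ?N" using nrm_mult[OF Kc] by simp
      hence "g \<otimes> (a \<otimes> b) \<otimes> inv g \<in> ?N" using g ac bc by (simp add: m_assoc) }
    thus "a \<otimes> b \<in> C" using ac bc by (auto simp: C_def)
  qed
  have "C \<lhd> G"
    unfolding normal_inv_iff
  proof (intro conjI sg ballI)
    fix x h assume x: "x \<in> carrier G" and h: "h \<in> C"
    hence hc: "h \<in> carrier G" by (auto simp: C_def)
    { fix g assume g: "g \<in> carrier G"
      have "(g \<otimes> x) \<otimes> h \<otimes> inv (g \<otimes> x) \<in> ?N" using h g x by (auto simp: C_def)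
      hence "g \<otimes> (x \<otimes> h \<otimes> inv x) \<otimes> inv g \<in> ?N" using g x hc by (simp add: inv_mult_group m_assoc) }
    thus "x \<otimes> h \<otimes> inv x \<in> C" using x hc by (auto simp: C_def)
  qed
  hence "C = {\<one>} \<or> C = carrier G" using simp by blast
  thus False
  proof
    assume CG: "C = carrier G"
    have "K \<lhd> G" unfolding normal_inv_iff
    proof (intro conjI K ballI)
      fix x h assume x: "x \<in> carrier G" and h: "h \<in> K"
      have "x \<in> C" using x CG by simp
      hence "\<one> \<otimes> x \<otimes> inv \<one> \<in> ?N" unfolding C_def using one_closed by blast
      hence "x \<in> ?N" using x by simp
      thus "x \<otimes> h \<otimes> inv x \<in> K" using h by (auto simp: nrm_def)
    qed
    thus False using simp K by blast
  next
    assume C1: "C = {\<one>}"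
    define psi where "psi x = (\<lambda>c\<in>G0. SOME c'. c' \<in> G0 \<and> c \<otimes> x \<otimes> inv c' \<in> ?N)" for x
    have psi: "psi x c \<in> G0 \<and> c \<otimes> x \<otimes> inv (psi x c) \<in> ?N" if "x \<in> carrier G" "c \<in> G0" for x c
    proof -
      have "c \<otimes> x \<in> carrier G" using that G0 by auto
      then obtain c' where "c' \<in> G0 \<and> c \<otimes> x \<otimes> inv c' \<in> ?N" using cov by blast
      hence "\<exists>c'. c' \<in> G0 \<and> c \<otimes> x \<otimes> inv c' \<in> ?N" by blast
      from someI_ex[OF this] show ?thesis using that by (simp add: psi_def)
    qed
    have "inj_on psi (carrier G)"
    proof (rule inj_onI)
      fix x y assume x: "x \<in> carrier G" and y: "y \<in> carrier G" and e: "psi x = psi y"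
      have "x \<otimes> inv y \<in> C"
      proof -
        { fix g assume g: "g \<in> carrier G"
          obtain c where c: "c \<in> G0" "g \<otimes> inv c \<in> ?N" using cov g by blast
          have cc: "c \<in> carrier G" using c G0 by auto
          let ?c' = "psi x c"
          have "?c' \<in> G0" "c \<otimes> x \<otimes> inv ?c' \<in> ?N" "c \<otimes> y \<otimes> inv ?c' \<in> ?N"
            using psi[OF x c(1)] psi[OF y c(1)] e by auto
          moreover have c'c: "?c' \<in> carrier G" using calculation G0 by auto
          ultimately have "(c \<otimes> x \<otimes> inv ?c') \<otimes> inv (c \<otimes> y \<otimes> inv ?c') \<in> ?N"
            using nrm_mult[OF Kc] nrm_inv[OF Kc] by simp
          hence 1: "c \<otimes> (x \<otimes> inv y) \<otimes> inv c \<in> ?N" using conj_eq3[OF cc x y c'c] by simp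
          have "(g \<otimes> inv c) \<otimes> (c \<otimes> (x \<otimes> inv y) \<otimes> inv c) \<otimes> inv (g \<otimes> inv c) \<in> ?N"
            using nrm_conj[OF Kc c(2) 1] .
          hence "g \<otimes> (x \<otimes> inv y) \<otimes> inv g \<in> ?N" using conj_eq2[OF g cc, of "x \<otimes> inv y"] x y by simp }
        thus ?thesis using x y by (auto simp: C_def)
      qed
      thus "x = y" using C1 eq_of_inv x y by blast
    qed
    moreover have "psi ` carrier G \<subseteq> G0 \<rightarrow>\<^sub>E G0" using psi by (auto simp: psi_def)
    moreover have "finite (G0 \<rightarrow>\<^sub>E G0)" using G0 by (simp add: finite_PiE)
    ultimately have "finite (carrier G)" using inj_on_finite by blast
    thus False using inf by blast
  qed
qed

end

context group begin

lemma prime_gen: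
  assumes K: "subgroup K G" and p: "Factorial_Ring.prime (card K)" and c: "c \<in> K" "c \<noteq> \<one>"
  shows "K = generate G {c}"
proof -
  have fK: "finite K" by (rule card_ge_0_finite[OF prime_gt_0_nat[OF p]])
  have cc: "c \<in> carrier G" by (rule subgroup.mem_carrier[OF K c(1)])
  have sub: "generate G {c} \<subseteq> K" using c(1) by (intro generate_subgroup_incl[OF _ K]) simp
  have sg: "subgroup (generate G {c}) G" using generate_is_subgroup cc by auto
  have sg2: "subgroup (generate G {c}) (G\<lparr>carrier := K\<rparr>)" using subgroup_incl[OF sg K sub] .
  have gK: "group (G\<lparr>carrier := K\<rparr>)" using subgroup_imp_group[OF K] .
  have "card (rcosets\<^bsub>G\<lparr>carrier := K\<rparr>\<^esub> (generate G {c})) * card (generate G {c}) = order (G\<lparr>carrier := K\<rparr>)"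
    using group.lagrange[OF gK sg2] .
  hence "card K = card (generate G {c}) * card (rcosets\<^bsub>G\<lparr>carrier := K\<rparr>\<^esub> (generate G {c}))"
    unfolding order_def by (simp add: mult.commute)
  hence dv: "card (generate G {c}) dvd card K" by (rule dvdI)
  have "{\<one>, c} \<subseteq> generate G {c}" using generate.one[of G "{c}"] generate.incl[of c "{c}" G] by auto
  moreover have "finite (generate G {c})" using sub fK finite_subset by blast
  ultimately have "card {\<one>, c} \<le> card (generate G {c})" using card_mono by blast
  moreover have "card {\<one>, c} = 2" using c(2) by simp
  ultimately have "card (generate G {c}) \<noteq> 1" by linarith
  moreover have "\<forall>m. m dvd card K \<longrightarrow> m = 1 \<or> m = card K" using prime_nat_iff[THEN iffD1, OF p] by blast
  ultimately have "card (generate G {c}) = card K" using dv by blast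
  thus ?thesis using card_subset_eq[OF fK sub] by simp
qed

lemma conj_gen:
  assumes K: "subgroup K G" and Kg: "K = generate G {c}" and y: "y \<in> carrier G" and cc: "c \<in> carrier G"
    and yc: "y \<otimes> c \<otimes> inv y \<in> K" and x: "x \<in> K"
  shows "y \<otimes> x \<otimes> inv y \<in> K"
proof -
  have "x \<in> generate G {c}" using x Kg by simp
  thus ?thesis
  proof (induction rule: generate.induct)
    case one thus ?case using y K by (simp add: subgroup.one_closed)
  next
    case (incl h) thus ?case using yc by simp
  next
    case (inv h)
    have "inv (y \<otimes> c \<otimes> inv y) \<in> K" by (rule subgroup.m_inv_closed[OF K yc])
    thus ?case using inv y cc by (simp add: inv_mult_group m_assoc)
  next
    case (eng h1 h2)
    have h: "h1 \<in> carrier G" "h2 \<in> carrier G" using eng.hyps generate_incl cc by auto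
    have "(y \<otimes> h1 \<otimes> inv y) \<otimes> (y \<otimes> h2 \<otimes> inv y) \<in> K" by (rule subgroup.m_closed[OF K eng.IH(1) eng.IH(2)])
    thus ?case using h y by (simp add: m_assoc)
  qed
qed

lemma same_d_nrm:
  assumes K: "subgroup K G" and p: "Factorial_Ring.prime (card K)" and d: "d \<in> carrier G" "d \<noteq> \<one>"
    and g: "g \<in> carrier G" and h: "h \<in> carrier G"
    and gd: "g \<otimes> d \<otimes> inv g \<in> K" and hd: "h \<otimes> d \<otimes> inv h \<in> K"
  shows "g \<otimes> inv h \<in> nrm G K"
proof -
  let ?c1 = "g \<otimes> d \<otimes> inv g" and ?c2 = "h \<otimes> d \<otimes> inv h"
  have c1c: "?c1 \<in> carrier G" and c2c: "?c2 \<in> carrier G" using g h d by auto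
  have c1: "?c1 \<noteq> \<one>"
  proof
    assume "?c1 = \<one>"
    hence "inv g \<otimes> (?c1 \<otimes> g) = inv g \<otimes> (\<one> \<otimes> g)" by simp
    thus False using g d by (simp add: m_assoc)
  qed
  have c2: "?c2 \<noteq> \<one>"
  proof
    assume "?c2 = \<one>"
    hence "inv h \<otimes> (?c2 \<otimes> h) = inv h \<otimes> (\<one> \<otimes> h)" by simp
    thus False using h d by (simp add: m_assoc)
  qed
  have K1: "K = generate G {?c1}" using prime_gen[OF K p gd c1] .
  have K2: "K = generate G {?c2}" using prime_gen[OF K p hd c2] .
  let ?y = "g \<otimes> inv h"
  have yc: "?y \<in> carrier G" using g h by auto
  have e1: "?y \<otimes> ?c2 \<otimes> inv ?y = ?c1" using g h d by (simp add: inv_mult_group m_assoc)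
  have e2: "inv ?y \<otimes> ?c1 \<otimes> inv (inv ?y) = ?c2" using g h d by (simp add: inv_mult_group m_assoc)
  { fix k assume k: "k \<in> K"
    have "?y \<otimes> k \<otimes> inv ?y \<in> K" using conj_gen[OF K K2 yc c2c] e1 gd k by simp
    moreover have "inv ?y \<otimes> k \<otimes> inv (inv ?y) \<in> K"
    proof -
      have yi: "inv ?y \<in> carrier G" using yc by simp
      have "inv ?y \<otimes> ?c1 \<otimes> inv (inv ?y) \<in> K" by (subst e2) (rule hd)
      from conj_gen[OF K K1 yi c1c this k] show ?thesis .
    qed
    ultimately have "?y \<otimes> k \<otimes> inv ?y \<in> K \<and> inv ?y \<otimes> k \<otimes> ?y \<in> K" using yc by simp }
  thus ?thesis using yc by (auto simp: nrm_def)
qed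

end


fun reach :: "('a, 'b) monoid_scheme \<Rightarrow> 'a set \<Rightarrow> 'a set \<Rightarrow> 'a set \<Rightarrow> nat \<Rightarrow> 'a set set" where
  "reach G K S v 0 = {v}"
| "reach G K S v (Suc r) = reach G K S v r \<union>
     {sch_terminus G e | e. e \<in> sch_edges G K S \<and> sch_origin e \<in> reach G K S v r}"

fun words :: "('a, 'b) monoid_scheme \<Rightarrow> 'a set \<Rightarrow> nat \<Rightarrow> 'a set" where
  "words G S 0 = {\<one>\<^bsub>G\<^esub>}"
| "words G S (Suc r) = words G S r \<union> {w \<otimes>\<^bsub>G\<^esub> x | w x. w \<in> words G S r \<and> x \<in> sch_labels G S}"

context group begin

lemma vert_iff: "v \<in> sch_vertices G K \<longleftrightarrow> (\<exists>a\<in>carrier G. v = K #> a)"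
  by (auto simp: sch_vertices_def RCOSETS_def)

lemma rcos_eqD: assumes K: "subgroup K G" and a: "a \<in> carrier G" and b: "b \<in> carrier G"
  and e: "K #> a = K #> b" shows "a \<otimes> inv b \<in> K"
proof -
  have "a \<in> K #> b" using rcos_self[OF a K] e by simp
  then obtain k where k: "k \<in> K" "a = k \<otimes> b" unfolding r_coset_def by blast
  have "k \<in> carrier G" by (rule subgroup.mem_carrier[OF K k(1)])
  thus ?thesis using k b by (simp add: m_assoc)
qed

lemma rcos_eqI: assumes K: "subgroup K G" and a: "a \<in> carrier G" and b: "b \<in> carrier G"
  and e: "a \<otimes> inv b \<in> K" shows "K #> a = K #> b"
proof -
  have Kc: "K \<subseteq> carrier G" using K subgroup.subset by blast
  have "K #> a = K #> ((a \<otimes> inv b) \<otimes> b)" using a b by (simp add: m_assoc)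
  also have "\<dots> = (K #> (a \<otimes> inv b)) #> b" using coset_mult_assoc[OF Kc, of "a \<otimes> inv b" b] a b by simp
  also have "\<dots> = K #> b" using coset_join2[OF _ K e] a b by simp
  finally show ?thesis .
qed

lemma vert_sub: assumes K: "subgroup K G" and v: "v \<in> sch_vertices G K" shows "v \<subseteq> carrier G"
proof -
  obtain a where a: "a \<in> carrier G" "v = K #> a" using v vert_iff by blast
  have Kc: "K \<subseteq> carrier G" using K subgroup.subset by blast
  show ?thesis using r_coset_subset_G[OF Kc a(1)] a(2) by simp
qed

lemma vert_mult: assumes K: "subgroup K G" and v: "v \<in> sch_vertices G K" and x: "x \<in> carrier G"
  shows "v #> x \<in> sch_vertices G K"
proof -
  obtain a where a: "a \<in> carrier G" "v = K #> a" using v vert_iff by blast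
  have Kc: "K \<subseteq> carrier G" using K subgroup.subset by blast
  have "v #> x = K #> (a \<otimes> x)" using coset_mult_assoc[OF Kc a(1) x] a(2) by simp
  thus ?thesis using a x vert_iff by blast
qed

lemma labels_carrier: "sch_labels G S \<subseteq> carrier G" by (auto simp: sch_labels_def)
lemma labels_S: "x \<in> S \<Longrightarrow> S \<subseteq> carrier G \<Longrightarrow> x \<in> sch_labels G S" by (auto simp: sch_labels_def)
lemma labels_invS: "x \<in> S \<Longrightarrow> S \<subseteq> carrier G \<Longrightarrow> inv x \<in> sch_labels G S" by (auto simp: sch_labels_def)
lemma labels_finite: assumes "finite S" shows "finite (sch_labels G S)"
proof -
  have "sch_labels G S \<subseteq> S \<union> (\<lambda>s. inv s) ` S"
  proof
    fix x assume "x \<in> sch_labels G S"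
    hence x: "x \<in> carrier G" "x \<in> S \<or> inv x \<in> S" by (simp_all add: sch_labels_def)
    have "x = inv (inv x)" using x by simp
    thus "x \<in> S \<union> (\<lambda>s. inv s) ` S" using x(2) by blast
  qed
  thus ?thesis using assms finite_subset by blast
qed

lemma autX_shift:
  assumes K: "subgroup K G" and SG: "S \<subseteq> carrier G" and gen: "generate G S = carrier G"
    and aut: "sch_aut_X G K S f g"
    and v: "v \<in> sch_vertices G K" and a: "a \<in> carrier G"
  shows "f (v #> a) = f v #> a"
proof -
  have step: "f (u #> x) = f u #> x" if u: "u \<in> sch_vertices G K" and x: "x \<in> sch_labels G S" for u x
  proof -
    have e: "(u, x) \<in> sch_edges G K S" using u x by (simp add: sch_edges_def)
    have lab: "snd (g (u, x)) = x" using aut e by (auto simp: sch_aut_X_def sch_label_def)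
    have A: "sch_aut G K S f g" using aut by (simp add: sch_aut_X_def)
    have conds: "f (sch_origin (u,x)) = sch_origin (g (u,x)) \<and> f (sch_terminus G (u,x)) = sch_terminus G (g (u,x))"
      using A e unfolding sch_aut_def by blast
    have o: "f u = fst (g (u, x))" using conds by (simp add: sch_origin_def)
    have "f (u #> x) = fst (g (u, x)) #> snd (g (u,x))" using conds by (simp add: sch_terminus_def)
    thus ?thesis using o lab by simp
  qed
  have vc: "v \<subseteq> carrier G" using vert_sub[OF K v] .
  have "a \<in> generate G S" using a gen by simp
  thus ?thesis using v vc
  proof (induction arbitrary: v rule: generate.induct)
    case one
    have "f v \<subseteq> carrier G"
    proof -
      have "f v \<in> sch_vertices G K" using aut one(1) by (auto simp: sch_aut_X_def sch_aut_def bij_betw_def)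
      thus ?thesis by (rule vert_sub[OF K])
    qed
    thus ?case using one by simp
  next
    case (incl h) thus ?case using step labels_S SG by blast
  next
    case (inv h) thus ?case using step labels_invS SG by blast
  next
    case (eng h1 h2)
    have h: "h1 \<in> carrier G" "h2 \<in> carrier G" using eng.hyps gen by auto
    have v1: "v #> h1 \<in> sch_vertices G K"
      by (rule vert_mult[OF K eng.prems(1) h(1)])
    have fv: "f v \<in> sch_vertices G K" using aut eng.prems(1) by (auto simp: sch_aut_X_def sch_aut_def bij_betw_def)
    have fvc: "f v \<subseteq> carrier G" using vert_sub[OF K fv] .
    have "f (v #> (h1 \<otimes> h2)) = f ((v #> h1) #> h2)" using coset_mult_assoc[OF eng.prems(2) h] by simp
    also have "\<dots> = f (v #> h1) #> h2" using eng.IH(2)[OF v1 vert_sub[OF K v1]] .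
    also have "\<dots> = (f v #> h1) #> h2" using eng.IH(1)[OF eng.prems] by simp
    also have "\<dots> = f v #> (h1 \<otimes> h2)" using coset_mult_assoc[OF fvc h] .
    finally show ?case .
  qed
qed

lemma autX_form:
  assumes K: "subgroup K G" and SG: "S \<subseteq> carrier G" and gen: "generate G S = carrier G"
    and aut: "sch_aut_X G K S f g"
  shows "\<exists>n \<in> nrm G K. \<forall>a \<in> carrier G. f (K #> a) = K #> (n \<otimes> a)"
proof -
  have Kc: "K \<subseteq> carrier G" using K subgroup.subset by blast
  have KV: "K \<in> sch_vertices G K" using vert_iff[of K K] coset_mult_one[OF Kc] by force
  have bij: "bij_betw f (sch_vertices G K) (sch_vertices G K)" using aut by (simp add: sch_aut_X_def sch_aut_def)
  hence "f K \<in> sch_vertices G K" using KV bij_betwE by blast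
  then obtain n where n: "n \<in> carrier G" "f K = K #> n" by (auto simp: vert_iff)
  have fa: "f (K #> a) = K #> (n \<otimes> a)" if a: "a \<in> carrier G" for a
    using autX_shift[OF K SG gen aut KV a] n a coset_mult_assoc[OF Kc] by simp
  have inj: "inj_on f (sch_vertices G K)" using bij bij_betw_def by blast
  { fix k assume k: "k \<in> K"
    have kc: "k \<in> carrier G" using k Kc by auto
    have "K #> (n \<otimes> k) = f (K #> k)" using fa kc by simp
    also have "\<dots> = K #> n" using coset_join2[OF kc K k] n by simp
    finally have "(n \<otimes> k) \<otimes> inv n \<in> K" using rcos_eqD[OF K _ n(1)] n kc by simp
    moreover have "inv n \<otimes> k \<otimes> n \<in> K"
    proof -
    have "f (K #> (inv n \<otimes> k \<otimes> n)) = K #> (n \<otimes> (inv n \<otimes> k \<otimes> n))" using fa n kc by simp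
    also have "\<dots> = K #> (k \<otimes> n)" using n kc by (simp add: m_assoc)
    also have "\<dots> = K #> n" using coset_mult_assoc[OF Kc kc n(1), symmetric] coset_join2[OF kc K k] by simp
    also have "\<dots> = f (K #> \<one>)" using n Kc by simp
    finally have "K #> (inv n \<otimes> k \<otimes> n) = K #> \<one>"
      using inj n kc unfolding inj_on_def by (metis one_closed inv_closed m_closed vert_iff)
    hence "(inv n \<otimes> k \<otimes> n) \<otimes> inv \<one> \<in> K" using rcos_eqD[OF K _ one_closed] n kc by simp
    thus ?thesis using n kc by simp
    qed
    ultimately have "n \<otimes> k \<otimes> inv n \<in> K \<and> inv n \<otimes> k \<otimes> n \<in> K" using n kc by simp }
  hence "n \<in> nrm G K" using n by (auto simp: nrm_def)
  thus ?thesis using fa by blast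
qed

end

context group begin

lemma words_carrier: "words G S r \<subseteq> carrier G"
  by (induction r) (auto simp: sch_labels_def)

lemma words_finite: assumes "finite S" shows "finite (words G S r)"
proof (induction r)
  case 0 thus ?case by simp
next
  case (Suc r)
  have "finite {w \<otimes> x | w x. w \<in> words G S r \<and> x \<in> sch_labels G S}"
    using finite_image_set2[of "\<lambda>w. w \<in> words G S r" "\<lambda>x. x \<in> sch_labels G S" "(\<otimes>)"]
      Suc labels_finite[OF assms] by simp
  thus ?case using Suc by simp
qed

lemma words_mono: "r \<le> s \<Longrightarrow> words G S r \<subseteq> words G S s"
  by (rule lift_Suc_mono_le[of "words G S"]) auto

lemma words_gen_aux:
  assumes SG: "S \<subseteq> carrier G" and x: "x \<in> generate G S"
  shows "\<exists>r. \<forall>s. \<forall>w \<in> words G S s. w \<otimes> x \<in> words G S (s + r)"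
  using x
proof (induction rule: generate.induct)
  case one
  have "\<forall>s. \<forall>w \<in> words G S s. w \<otimes> \<one> \<in> words G S (s + 0)"
  proof (intro allI ballI)
    fix s w assume w: "w \<in> words G S s"
    moreover hence "w \<in> carrier G" using words_carrier by blast
    ultimately show "w \<otimes> \<one> \<in> words G S (s + 0)" by simp
  qed
  thus ?case by blast
next
  case (incl h)
  have "\<forall>s. \<forall>w \<in> words G S s. w \<otimes> h \<in> words G S (s + 1)"
    using labels_S[OF incl SG] by auto
  thus ?case by blast
next
  case (inv h)
  have "\<forall>s. \<forall>w \<in> words G S s. w \<otimes> inv h \<in> words G S (s + 1)"
    using labels_invS[OF inv SG] by auto
  thus ?case by blast
next
  case (eng h1 h2)
  obtain r1 where r1: "\<forall>s. \<forall>w \<in> words G S s. w \<otimes> h1 \<in> words G S (s + r1)" using eng.IH(1) by blast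
  obtain r2 where r2: "\<forall>s. \<forall>w \<in> words G S s. w \<otimes> h2 \<in> words G S (s + r2)" using eng.IH(2) by blast
  have h: "h1 \<in> carrier G" "h2 \<in> carrier G" using eng.hyps generate_incl[OF SG] by auto
  { fix s w assume w: "w \<in> words G S s"
    have wc: "w \<in> carrier G" using w words_carrier by blast
    have "w \<otimes> h1 \<in> words G S (s + r1)" using r1 w by blast
    hence "(w \<otimes> h1) \<otimes> h2 \<in> words G S (s + r1 + r2)" using r2 by blast
    hence "w \<otimes> (h1 \<otimes> h2) \<in> words G S (s + (r1 + r2))" using wc h by (simp add: m_assoc add.assoc) }
  thus ?case by blast
qed

lemma words_gen:
  assumes SG: "S \<subseteq> carrier G" and x: "x \<in> generate G S"
  shows "\<exists>r. x \<in> words G S r"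
proof -
  obtain r where r: "\<forall>s. \<forall>w \<in> words G S s. w \<otimes> x \<in> words G S (s + r)" using words_gen_aux[OF SG x] by blast
  have h: "\<forall>w \<in> words G S 0. w \<otimes> x \<in> words G S (0 + r)" using r by blast
  hence "\<one> \<otimes> x \<in> words G S r" by simp
  moreover have "x \<in> carrier G" using x generate_incl[OF SG] by blast
  ultimately show ?thesis by auto
qed

lemma edge_origin: "e \<in> sch_edges G K S \<Longrightarrow> sch_origin e \<in> sch_vertices G K"
  by (auto simp: sch_edges_def sch_origin_def)

lemma edge_terminus: assumes K: "subgroup K G" and e: "e \<in> sch_edges G K S"
  shows "sch_terminus G e \<in> sch_vertices G K"
proof -
  have "fst e \<in> sch_vertices G K" "snd e \<in> sch_labels G S" using e by (auto simp: sch_edges_def)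
  moreover have "snd e \<in> carrier G" using calculation(2) labels_carrier by blast
  ultimately show ?thesis using vert_mult[OF K] by (simp add: sch_terminus_def)
qed

lemma reach_sub: assumes K: "subgroup K G" and v: "v \<in> sch_vertices G K"
  shows "reach G K S v r \<subseteq> sch_vertices G K"
  using edge_terminus[OF K] v by (induction r) auto

lemma reach_aut:
  assumes K: "subgroup K G" and aut: "sch_aut G K S f g" and v: "v \<in> sch_vertices G K"
  shows "f ` reach G K S v r = reach G K S (f v) r"
proof (induction r)
  case 0 thus ?case by simp
next
  case (Suc r)
  let ?E = "sch_edges G K S" and ?V = "sch_vertices G K"
  have bf: "bij_betw f ?V ?V" and bg: "bij_betw g ?E ?E"
    and c: "\<forall>e\<in>?E. f (sch_origin e) = sch_origin (g e) \<and> f (sch_terminus G e) = sch_terminus G (g e)"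
    using aut by (auto simp: sch_aut_def)
  have injf: "inj_on f ?V" using bf bij_betw_def by blast
  have Rs: "reach G K S v r \<subseteq> ?V" using reach_sub[OF K v] .
  have "f ` {sch_terminus G e | e. e \<in> ?E \<and> sch_origin e \<in> reach G K S v r}
      = {sch_terminus G e | e. e \<in> ?E \<and> sch_origin e \<in> reach G K S (f v) r}"
  proof (intro equalityI subsetI)
    fix y assume "y \<in> f ` {sch_terminus G e | e. e \<in> ?E \<and> sch_origin e \<in> reach G K S v r}"
    then obtain e where e: "e \<in> ?E" "sch_origin e \<in> reach G K S v r" "y = f (sch_terminus G e)" by blast
    have "g e \<in> ?E" using bg e(1) bij_betwE by blast
    moreover have "sch_origin (g e) \<in> reach G K S (f v) r" using c e Suc.IH by blast
    moreover have "y = sch_terminus G (g e)" using c e by blast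
    ultimately show "y \<in> {sch_terminus G e | e. e \<in> ?E \<and> sch_origin e \<in> reach G K S (f v) r}" by blast
  next
    fix y assume "y \<in> {sch_terminus G e | e. e \<in> ?E \<and> sch_origin e \<in> reach G K S (f v) r}"
    then obtain e' where e': "e' \<in> ?E" "sch_origin e' \<in> reach G K S (f v) r" "y = sch_terminus G e'" by blast
    obtain e where e: "e \<in> ?E" "e' = g e" using bg e'(1) by (metis bij_betw_def imageE)
    obtain ov where ov: "ov \<in> reach G K S v r" "sch_origin e' = f ov" using e'(2) Suc.IH by blast
    have "f (sch_origin e) = f ov" using c e ov by metis
    moreover have "sch_origin e \<in> ?V" using edge_origin e(1) .
    moreover have "ov \<in> ?V" using ov Rs by blast
    ultimately have "sch_origin e = ov" using injf inj_on_def by metis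
    hence "sch_terminus G e \<in> {sch_terminus G e | e. e \<in> ?E \<and> sch_origin e \<in> reach G K S v r}" using e ov by blast
    moreover have "y = f (sch_terminus G e)" using c e e' by metis
    ultimately show "y \<in> f ` {sch_terminus G e | e. e \<in> ?E \<and> sch_origin e \<in> reach G K S v r}" by blast
  qed
  thus ?case using Suc.IH by (simp add: image_Un)
qed

lemma reach_card_aut:
  assumes K: "subgroup K G" and aut: "sch_aut G K S f g" and v: "v \<in> sch_vertices G K"
  shows "card (reach G K S (f v) r) = card (reach G K S v r)"
proof -
  have "inj_on f (sch_vertices G K)" using aut by (auto simp: sch_aut_def bij_betw_def)
  hence "inj_on f (reach G K S v r)" using reach_sub[OF K v] inj_on_subset by blast
  thus ?thesis using reach_aut[OF K aut v] card_image by metis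
qed

lemma reach_eq:
  assumes K: "subgroup K G" and a: "a \<in> carrier G"
  shows "reach G K S (K #> a) r = (\<lambda>w. K #> (a \<otimes> w)) ` words G S r"
proof (induction r)
  case 0 thus ?case using a by simp
next
  case (Suc r)
  let ?E = "sch_edges G K S" and ?V = "sch_vertices G K" and ?L = "sch_labels G S"
  have Kc: "K \<subseteq> carrier G" using K subgroup.subset by blast
  have "{sch_terminus G e | e. e \<in> ?E \<and> sch_origin e \<in> reach G K S (K #> a) r}
      = (\<lambda>w. K #> (a \<otimes> w)) ` {w \<otimes> x | w x. w \<in> words G S r \<and> x \<in> ?L}"
  proof (intro equalityI subsetI)
    fix y assume "y \<in> {sch_terminus G e | e. e \<in> ?E \<and> sch_origin e \<in> reach G K S (K #> a) r}"
    then obtain e where e: "e \<in> ?E" "sch_origin e \<in> reach G K S (K #> a) r" "y = sch_terminus G e" by blast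
    obtain C x where Cx: "e = (C, x)" by (cases e)
    have x: "x \<in> ?L" using e(1) Cx by (simp add: sch_edges_def)
    have xc: "x \<in> carrier G" using x labels_carrier by blast
    obtain w where w: "w \<in> words G S r" "C = K #> (a \<otimes> w)" using e(2) Cx Suc.IH by (auto simp: sch_origin_def)
    have wc: "w \<in> carrier G" using w words_carrier by blast
    have "y = K #> (a \<otimes> w) #> x" using e(3) Cx w by (simp add: sch_terminus_def)
    also have "\<dots> = K #> (a \<otimes> (w \<otimes> x))" using coset_mult_assoc[OF Kc _ xc, of "a \<otimes> w"] a wc xc by (simp add: m_assoc)
    finally show "y \<in> (\<lambda>w. K #> (a \<otimes> w)) ` {w \<otimes> x | w x. w \<in> words G S r \<and> x \<in> ?L}" using w x by blast
  next
    fix y assume "y \<in> (\<lambda>w. K #> (a \<otimes> w)) ` {w \<otimes> x | w x. w \<in> words G S r \<and> x \<in> ?L}"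
    then obtain w x where w: "w \<in> words G S r" "x \<in> ?L" "y = K #> (a \<otimes> (w \<otimes> x))" by blast
    have xc: "x \<in> carrier G" using w labels_carrier by blast
    have wc: "w \<in> carrier G" using w words_carrier by blast
    let ?e = "(K #> (a \<otimes> w), x)"
    have "K #> (a \<otimes> w) \<in> ?V" using vert_iff a wc by blast
    hence "?e \<in> ?E" using w by (simp add: sch_edges_def)
    moreover have "sch_origin ?e \<in> reach G K S (K #> a) r" using Suc.IH w by (simp add: sch_origin_def)
    moreover have "y = sch_terminus G ?e"
      using coset_mult_assoc[OF Kc _ xc, of "a \<otimes> w"] a wc xc w(3) by (simp add: m_assoc sch_terminus_def)
    ultimately show "y \<in> {sch_terminus G e | e. e \<in> ?E \<and> sch_origin e \<in> reach G K S (K #> a) r}" by blast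
  qed
  thus ?case using Suc.IH by (simp add: image_Un)
qed

end

context group begin

lemma nrm_K: assumes K: "subgroup K G" and k: "k \<in> K" shows "k \<in> nrm G K"
proof -
  have kc: "k \<in> carrier G" by (rule subgroup.mem_carrier[OF K k])
  { fix x assume x: "x \<in> K"
    have "k \<otimes> x \<otimes> inv k \<in> K"
      by (rule subgroup.m_closed[OF K subgroup.m_closed[OF K k x] subgroup.m_inv_closed[OF K k]])
    moreover have "inv k \<otimes> x \<otimes> k \<in> K"
      by (rule subgroup.m_closed[OF K subgroup.m_closed[OF K subgroup.m_inv_closed[OF K k] x] k])
    ultimately have "k \<otimes> x \<otimes> inv k \<in> K \<and> inv k \<otimes> x \<otimes> k \<in> K" by blast }
  thus ?thesis using kc by (auto simp: nrm_def)
qed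

lemma ballcount_false:
  assumes simp: "\<forall>H. H \<lhd> G \<longrightarrow> H = {\<one>} \<or> H = carrier G"
    and inf: "infinite (carrier G)" and K: "subgroup K G" "K \<noteq> {\<one>}" "K \<noteq> carrier G"
    and p: "Factorial_Ring.prime (card K)"
    and S: "finite S" "S \<subseteq> carrier G" "generate G S = carrier G"
    and V0: "finite V0" "V0 \<subseteq> sch_vertices G K"
    and cov: "\<forall>v\<in>sch_vertices G K. \<exists>u\<in>V0. \<forall>r. card (reach G K S v r) = card (reach G K S u r)"
  shows False
proof -
  have Kc: "K \<subseteq> carrier G" using K(1) subgroup.subset by blast
  have oneK: "\<one> \<in> K" by (rule subgroup.one_closed[OF K(1)])
  obtain c where c: "c \<in> K" "c \<noteq> \<one>" using K(2) oneK by blast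
  have cc: "c \<in> carrier G" using c Kc by blast
  have wf: "\<And>r. finite (words G S r)" using words_finite[OF S(1)] .
  have ru: "\<exists>r0. \<forall>r\<ge>r0. card (reach G K S u r) < card (words G S r)" if u: "u \<in> V0" for u
  proof -
    obtain a where a: "a \<in> carrier G" "u = K #> a" using u V0 vert_iff by blast
    let ?d = "inv a \<otimes> c \<otimes> a"
    have dc: "?d \<in> carrier G" using a cc by simp
    obtain r0 where r0: "?d \<in> words G S r0" using words_gen[OF S(2)] dc S(3) by blast
    have dne: "?d \<noteq> \<one>"
    proof
      assume "?d = \<one>"
      hence "a \<otimes> (?d \<otimes> inv a) = a \<otimes> (\<one> \<otimes> inv a)" by simp
      thus False using a cc c(2) by (simp add: m_assoc)
    qed
    { fix r assume r: "r \<ge> r0"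
      have dw: "?d \<in> words G S r" using words_mono[OF r] r0 by blast
      have ow: "\<one> \<in> words G S r" using words_mono[of 0 r] by auto
      have "K #> (a \<otimes> ?d) = K #> (c \<otimes> a)" using a cc by (simp add: m_assoc)
      also have "\<dots> = K #> (a \<otimes> \<one>)"
        using rcos_eqI[OF K(1), of "c \<otimes> a" "a \<otimes> \<one>"] a cc c by (simp add: m_assoc)
      finally have "\<not> inj_on (\<lambda>w. K #> (a \<otimes> w)) (words G S r)"
        using dw ow dne unfolding inj_on_def by blast
      hence "card ((\<lambda>w. K #> (a \<otimes> w)) ` words G S r) \<noteq> card (words G S r)"
        using eq_card_imp_inj_on[OF wf] by blast
      moreover have "card ((\<lambda>w. K #> (a \<otimes> w)) ` words G S r) \<le> card (words G S r)"
        using card_image_le[OF wf] by blast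
      ultimately have "card (reach G K S u r) < card (words G S r)" using reach_eq[OF K(1) a(1)] a(2) by simp }
    thus ?thesis by blast
  qed
  obtain rr where rr: "\<And>u. u \<in> V0 \<Longrightarrow> \<forall>r\<ge>rr u. card (reach G K S u r) < card (words G S r)"
    using ru by metis
  define R where "R = (\<Sum>u\<in>V0. rr u)"
  have Rle: "rr u \<le> R" if "u \<in> V0" for u unfolding R_def using member_le_sum[OF that _ V0(1), of rr] by simp
  define D where "D = {w \<otimes> inv w' | w w'. w \<in> words G S R \<and> w' \<in> words G S R}"
  have fD: "finite D" unfolding D_def
    using finite_image_set2[of "\<lambda>w. w \<in> words G S R" "\<lambda>w'. w' \<in> words G S R" "\<lambda>w w'. w \<otimes> inv w'"] wf by simp
  have allg: "\<exists>d\<in>D. d \<noteq> \<one> \<and> g \<otimes> d \<otimes> inv g \<in> K" if g: "g \<in> carrier G" for g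
  proof -
    have v: "K #> g \<in> sch_vertices G K" using g vert_iff by blast
    obtain u where u: "u \<in> V0" "\<forall>r. card (reach G K S (K #> g) r) = card (reach G K S u r)" using cov v by blast
    have "card (reach G K S (K #> g) R) < card (words G S R)" using rr[OF u(1)] Rle[OF u(1)] u(2) by simp
    hence "card ((\<lambda>w. K #> (g \<otimes> w)) ` words G S R) \<noteq> card (words G S R)" using reach_eq[OF K(1) g] by simp
    hence "\<not> inj_on (\<lambda>w. K #> (g \<otimes> w)) (words G S R)" using card_image by blast
    then obtain w w' where w: "w \<in> words G S R" "w' \<in> words G S R" "w \<noteq> w'" "K #> (g \<otimes> w) = K #> (g \<otimes> w')"
      unfolding inj_on_def by blast
    have wc: "w \<in> carrier G" "w' \<in> carrier G" using w words_carrier by blast+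
    have "(g \<otimes> w) \<otimes> inv (g \<otimes> w') \<in> K" using rcos_eqD[OF K(1) _ _ w(4)] g wc by simp
    hence "g \<otimes> (w \<otimes> inv w') \<otimes> inv g \<in> K" using g wc by (simp add: inv_mult_group m_assoc)
    moreover have "w \<otimes> inv w' \<noteq> \<one>" using eq_of_inv wc w(3) by blast
    moreover have "w \<otimes> inv w' \<in> D" using w unfolding D_def by blast
    ultimately show ?thesis by blast
  qed
  define D' where "D' = {d \<in> D. d \<noteq> \<one> \<and> (\<exists>g\<in>carrier G. g \<otimes> d \<otimes> inv g \<in> K)}"
  define rep where "rep d = (SOME g. g \<in> carrier G \<and> g \<otimes> d \<otimes> inv g \<in> K)" for d
  have rep: "rep d \<in> carrier G \<and> rep d \<otimes> d \<otimes> inv (rep d) \<in> K" if "d \<in> D'" for d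
  proof -
    have "\<exists>g. g \<in> carrier G \<and> g \<otimes> d \<otimes> inv g \<in> K" using that by (auto simp: D'_def)
    from someI_ex[OF this] show ?thesis by (simp add: rep_def)
  qed
  have Dc: "D \<subseteq> carrier G" unfolding D_def using words_carrier by blast
  show False
  proof (rule cover_false[OF simp inf K])
    show "finite (rep ` D')" using fD by (simp add: D'_def)
    show "rep ` D' \<subseteq> carrier G" using rep by blast
    show "\<forall>g\<in>carrier G. \<exists>c\<in>rep ` D'. g \<otimes> inv c \<in> nrm G K"
    proof
      fix g assume g: "g \<in> carrier G"
      obtain d where d: "d \<in> D" "d \<noteq> \<one>" "g \<otimes> d \<otimes> inv g \<in> K" using allg[OF g] by blast
      have dD: "d \<in> D'" using d g by (auto simp: D'_def)
      have "g \<otimes> inv (rep d) \<in> nrm G K"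
        using same_d_nrm[OF K(1) p _ d(2) g _ d(3)] rep[OF dD] d(1) Dc by blast
      thus "\<exists>c\<in>rep ` D'. g \<otimes> inv c \<in> nrm G K" using dD by blast
    qed
  qed
qed

end


lemma aut_id: "sch_aut A K S id id" by (simp add: sch_aut_def bij_betw_id)
lemma autX_id: "sch_aut_X A K S id id" by (simp add: sch_aut_X_def aut_id)

lemma orbit_reps:
  assumes fin: "finite (vertex_orbits A K P)" and Pid: "P id id"
  shows "\<exists>F. finite F \<and> F \<subseteq> sch_vertices A K \<and>
           (\<forall>v\<in>sch_vertices A K. \<exists>u\<in>F. \<exists>f g. P f g \<and> f u = v)"
proof -
  define Orb where "Orb v = {w \<in> sch_vertices A K. \<exists>f g. P f g \<and> f v = w}" for v
  have VO: "vertex_orbits A K P = Orb ` sch_vertices A K" by (simp add: vertex_orbits_def Orb_def)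
  define F where "F = (\<lambda>ob. SOME u. u \<in> sch_vertices A K \<and> Orb u = ob) ` vertex_orbits A K P"
  have Fp: "(SOME u. u \<in> sch_vertices A K \<and> Orb u = Orb v) \<in> sch_vertices A K \<and>
            Orb (SOME u. u \<in> sch_vertices A K \<and> Orb u = Orb v) = Orb v" if v: "v \<in> sch_vertices A K" for v
    by (rule someI_ex) (use v in blast)
  have "finite F" using fin by (simp add: F_def)
  moreover have "F \<subseteq> sch_vertices A K" using Fp by (auto simp: F_def VO)
  moreover have "\<forall>v\<in>sch_vertices A K. \<exists>u\<in>F. \<exists>f g. P f g \<and> f u = v"
  proof
    fix v assume v: "v \<in> sch_vertices A K"
    let ?u = "SOME u. u \<in> sch_vertices A K \<and> Orb u = Orb v"
    have uF: "?u \<in> F" using v by (auto simp: F_def VO)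
    have "v \<in> Orb v" using v Pid by (auto simp: Orb_def)
    hence "v \<in> Orb ?u" using Fp[OF v] by simp
    thus "\<exists>u\<in>F. \<exists>f g. P f g \<and> f u = v" using uF by (auto simp: Orb_def)
  qed
  ultimately show ?thesis by blast
qed

theorem corollary6p7:
  fixes A :: "('a, 'b) monoid_scheme" and K S :: "'a set"
  assumes "simple_grp A"
    and "infinite (carrier A)"
    and "finite S" and "S \<subseteq> carrier A" and "generate A S = carrier A"
    and "subgroup K A" and "K \<noteq> {\<one>\<^bsub>A\<^esub>}" and "K \<noteq> carrier A"
  shows "infinite (vertex_orbits A K (sch_aut_X A K S))
    \<and> ((\<exists>k \<in> K. K = generate A {k}) \<and> Factorial_Ring.prime (card K) \<longrightarrow>
         infinite (vertex_orbits A K (sch_aut A K S)) \<and> \<not> sch_almost_transitive A K S)"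
proof -
  have grp: "group A" using assms(1) by (simp add: simple_grp_def)
  interpret group A by (rule grp)
  have SIMP: "\<forall>H. H \<lhd> A \<longrightarrow> H = {\<one>\<^bsub>A\<^esub>} \<or> H = carrier A" using assms(1) by (simp add: simple_grp_def)
  note K = assms(6,7,8)
  have Kc: "K \<subseteq> carrier A" using K(1) subgroup.subset by blast
  have part1: "infinite (vertex_orbits A K (sch_aut_X A K S))"
  proof
    assume fin: "finite (vertex_orbits A K (sch_aut_X A K S))"
    obtain F where F: "finite F" "F \<subseteq> sch_vertices A K"
      "\<forall>v\<in>sch_vertices A K. \<exists>u\<in>F. \<exists>f g. sch_aut_X A K S f g \<and> f u = v"
      using orbit_reps[OF fin autX_id] by blast
    define rep where "rep u = (SOME a. a \<in> carrier A \<and> u = K #>\<^bsub>A\<^esub> a)" for u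
    have rep: "rep u \<in> carrier A \<and> u = K #>\<^bsub>A\<^esub> rep u" if "u \<in> F" for u
    proof -
      have "\<exists>a. a \<in> carrier A \<and> u = K #>\<^bsub>A\<^esub> a" using that F(2) vert_iff by blast
      from someI_ex[OF this] show ?thesis by (simp add: rep_def)
    qed
    show False
    proof (rule cover_false[OF SIMP assms(2) K])
      show "finite (rep ` F)" using F(1) by simp
      show "rep ` F \<subseteq> carrier A" using rep by blast
      show "\<forall>g\<in>carrier A. \<exists>c\<in>rep ` F. g \<otimes>\<^bsub>A\<^esub> inv\<^bsub>A\<^esub> c \<in> nrm A K"
      proof
        fix g assume g: "g \<in> carrier A"
        have v: "K #>\<^bsub>A\<^esub> g \<in> sch_vertices A K" using g vert_iff by blast
        obtain u f h where u: "u \<in> F" "sch_aut_X A K S f h" "f u = K #>\<^bsub>A\<^esub> g" using F(3) v by blast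
        let ?a = "rep u"
        have a: "?a \<in> carrier A" "u = K #>\<^bsub>A\<^esub> ?a" using rep[OF u(1)] by auto
        obtain n where n: "n \<in> nrm A K" "\<forall>x\<in>carrier A. f (K #>\<^bsub>A\<^esub> x) = K #>\<^bsub>A\<^esub> (n \<otimes>\<^bsub>A\<^esub> x)"
          using autX_form[OF K(1) assms(4,5) u(2)] by blast
        have nc: "n \<in> carrier A" using n(1) by (simp add: nrm_def)
        have "K #>\<^bsub>A\<^esub> g = K #>\<^bsub>A\<^esub> (n \<otimes>\<^bsub>A\<^esub> ?a)" using u(3) a n(2) by metis
        hence "g \<otimes>\<^bsub>A\<^esub> inv\<^bsub>A\<^esub> (n \<otimes>\<^bsub>A\<^esub> ?a) \<in> K" using rcos_eqD[OF K(1) g] nc a by simp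
        hence "g \<otimes>\<^bsub>A\<^esub> inv\<^bsub>A\<^esub> (n \<otimes>\<^bsub>A\<^esub> ?a) \<in> nrm A K" using nrm_K[OF K(1)] by blast
        hence "(g \<otimes>\<^bsub>A\<^esub> inv\<^bsub>A\<^esub> (n \<otimes>\<^bsub>A\<^esub> ?a)) \<otimes>\<^bsub>A\<^esub> n \<in> nrm A K" using nrm_mult[OF Kc _ n(1)] by blast
        hence "g \<otimes>\<^bsub>A\<^esub> inv\<^bsub>A\<^esub> ?a \<in> nrm A K" using g nc a by (simp add: inv_mult_group m_assoc)
        thus "\<exists>c\<in>rep ` F. g \<otimes>\<^bsub>A\<^esub> inv\<^bsub>A\<^esub> c \<in> nrm A K" using u(1) by blast
      qed
    qed
  qed
  have part2: "infinite (vertex_orbits A K (sch_aut A K S)) \<and> \<not> sch_almost_transitive A K S"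
    if p: "Factorial_Ring.prime (card K)"
  proof
    show "infinite (vertex_orbits A K (sch_aut A K S))"
    proof
      assume fin: "finite (vertex_orbits A K (sch_aut A K S))"
      obtain F where F: "finite F" "F \<subseteq> sch_vertices A K"
        "\<forall>v\<in>sch_vertices A K. \<exists>u\<in>F. \<exists>f g. sch_aut A K S f g \<and> f u = v"
        using orbit_reps[OF fin aut_id] by blast
      show False
      proof (rule ballcount_false[OF SIMP assms(2) K p assms(3,4,5) F(1,2)])
        show "\<forall>v\<in>sch_vertices A K. \<exists>u\<in>F. \<forall>r. card (reach A K S v r) = card (reach A K S u r)"
        proof
          fix v assume v: "v \<in> sch_vertices A K"
          obtain u f g where u: "u \<in> F" "sch_aut A K S f g" "f u = v" using F(3) v by blast
          have "\<forall>r. card (reach A K S v r) = card (reach A K S u r)"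
            using reach_card_aut[OF K(1) u(2)] u(1,3) F(2) by blast
          thus "\<exists>u\<in>F. \<forall>r. card (reach A K S v r) = card (reach A K S u r)" using u(1) by blast
        qed
      qed
    qed
  next
    show "\<not> sch_almost_transitive A K S"
    proof
      assume "sch_almost_transitive A K S"
      then obtain V0 where V0: "finite V0" "V0 \<subseteq> sch_vertices A K"
        "\<forall>v\<in>sch_vertices A K. \<exists>f g. sch_aut A K S f g \<and> f v \<in> V0"
        by (auto simp: sch_almost_transitive_def)
      show False
      proof (rule ballcount_false[OF SIMP assms(2) K p assms(3,4,5) V0(1,2)])
        show "\<forall>v\<in>sch_vertices A K. \<exists>u\<in>V0. \<forall>r. card (reach A K S v r) = card (reach A K S u r)"
        proof
          fix v assume v: "v \<in> sch_vertices A K"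
          obtain f g where fg: "sch_aut A K S f g" "f v \<in> V0" using V0(3) v by blast
          have "\<forall>r. card (reach A K S v r) = card (reach A K S (f v) r)"
            using reach_card_aut[OF K(1) fg(1) v] by simp
          thus "\<exists>u\<in>V0. \<forall>r. card (reach A K S v r) = card (reach A K S u r)" using fg(2) by blast
        qed
      qed
    qed
  qed
  show ?thesis using part1 part2 by blast
qed



end
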